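(* Let $r\ge1$, $L\ge1$, and $\mathbf s_1,\dots,\mathbf s_L\in V(G_n)_r$ with $a=|\bigcup_{j=1}^L\bar{\mathbf s}_j|$. If $p_n\in(0,1)$ satisfies $\limsup_{n\to\infty}p_n<1$, then $$p_n^a\lesssim_r\mathbb E|Z_{\mathbf s_1}Z_{\mathbf s_2}\cdots Z_{\mathbf s_L}|\le(L+2)!\,p_n^a.$$
   Context: $V(G_n)$ is a finite vertex set; $V(G_n)_r$ is the set of $r$-tuples of distinct elements, $\bar{\mathbf s}$ the set of entries. $\{X_v\}$ are i.i.d. Bernoulli$(p_n)$, $X_{\mathbf s}=\prod_{u=1}^rX_{s_u}$, $Z_{\mathbf s}=X_{\mathbf s}-p_n^r$. $\lesssim_r$ means up to a positive constant depending only on $r$ (and not on $n$). *)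

theory Defs
  imports "HOL-Probability.Probability"
begin

text \<open>A vertex configuration is X :: 'v => bool (X v = True means X_v = 1).
  An r-tuple of distinct vertices is a distinct list of length r.\<close>

definition Xtup :: "('v \<Rightarrow> bool) \<Rightarrow> 'v list \<Rightarrow> real" where
  "Xtup X s = (\<Prod>u\<leftarrow>s. of_bool (X u))"

definition Ztup :: "real \<Rightarrow> ('v \<Rightarrow> bool) \<Rightarrow> 'v list \<Rightarrow> real" where
  "Ztup q X s = Xtup X s - q ^ length s"

definition bern_field :: "'v set \<Rightarrow> real \<Rightarrow> ('v \<Rightarrow> bool) pmf" where
  "bern_field Vn q = Pi_pmf Vn False (\<lambda>_. bernoulli_pmf q)"

definition absZmoment :: "'v set \<Rightarrow> real \<Rightarrow> 'v list list \<Rightarrow> real" where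
  "absZmoment Vn q ss =
     measure_pmf.expectation (bern_field Vn q) (\<lambda>X. \<bar>\<Prod>s\<leftarrow>ss. Ztup q X s\<bar>)"

end

theory Submission
  imports Defs
begin


lemma fin_bf: "finite Vn \<Longrightarrow> finite (set_pmf (bern_field Vn q))"
  unfolding bern_field_def
  by (subst set_Pi_pmf) (auto intro!: finite_PiE_dflt)

lemma key:
  assumes "finite Vn" "U \<subseteq> Vn" "0 \<le> q" "q \<le> 1"
  shows "measure_pmf.expectation (bern_field Vn q) (\<lambda>X. \<Prod>v\<in>U. of_bool (X v)) = q ^ card U"
proof -
  define f :: "'a \<Rightarrow> bool \<Rightarrow> real" where "f = (\<lambda>v y. if v \<in> U then of_bool y else 1)"
  have eq: "(\<lambda>X. \<Prod>v\<in>U. of_bool (X v) :: real) = (\<lambda>X. \<Prod>v\<in>Vn. f v (X v))"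
    using assms(1,2) unfolding f_def by (intro ext) (simp add: prod.If_cases Int_absorb1)
  have "measure_pmf.expectation (Pi_pmf Vn False (\<lambda>_. bernoulli_pmf q)) (\<lambda>X. \<Prod>v\<in>Vn. f v (X v)) =
     (\<Prod>v\<in>Vn. measure_pmf.expectation (bernoulli_pmf q) (\<lambda>y. f v y))"
    by (rule expectation_prod_Pi_pmf) (auto intro: assms integrable_measure_pmf_finite simp: f_def)
  also have "\<dots> = (\<Prod>v\<in>Vn. if v \<in> U then q else 1)"
    using assms by (intro prod.cong) (auto simp: f_def)
  also have "\<dots> = q ^ card U"
    using assms(1,2) by (simp add: prod.If_cases Int_absorb1)
  finally show ?thesis unfolding bern_field_def eq .
qed



lemma prod_list_nth: "(\<Prod>x\<leftarrow>xs. f x) = (\<Prod>i<length xs. f (xs ! i) :: 'b::comm_monoid_mult)"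
  by (induction xs) (simp_all del: prod.lessThan_Suc add: prod.lessThan_Suc_shift)

lemma prod_of_bool: "finite A \<Longrightarrow> (\<Prod>v\<in>A. of_bool (P v) :: real) = of_bool (\<forall>v\<in>A. P v)"
  by (induction A rule: finite_induct) auto

lemma Xtup_eq: "Xtup X s = of_bool (\<forall>u\<in>set s. X u)"
  unfolding Xtup_def by (induction s) auto

lemma Xtup_prod: "Xtup X s = (\<Prod>v\<in>set s. of_bool (X v))"
  by (simp add: Xtup_eq prod_of_bool)

lemma two_pow_fact: "(2::real) ^ L \<le> fact (L + 2)"
proof (induction L)
  case (Suc L)
  have "(2::real) ^ Suc L = 2 * 2 ^ L" by simp
  also have "\<dots> \<le> real (Suc L + 2) * fact (L + 2)"
    using Suc by (intro mult_mono) auto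
  also have "\<dots> = fact (Suc L + 2)" by (simp add: fact_Suc)
  finally show ?case .
qed auto



lemma bounds:
  fixes ss :: "'v list list" and Vn :: "'v set"
  assumes fin: "finite Vn" and q: "0 < q" "q \<le> c" "c < 1" and r: "r \<ge> 1"
    and ss: "\<forall>s\<in>set ss. length s = r \<and> set s \<subseteq> Vn"
  shows "(1-c)^length ss * q^card (\<Union>s\<in>set ss. set s) \<le> absZmoment Vn q ss \<and>
         absZmoment Vn q ss \<le> fact (length ss + 2) * q^card (\<Union>s\<in>set ss. set s)"
proof -
  define U where "U = (\<Union>s\<in>set ss. set s)"
  define L where "L = length ss"
  define M where "M = bern_field Vn q"
  have int: "integrable (measure_pmf M) f" for f :: "_ \<Rightarrow> real"
    unfolding M_def by (rule integrable_measure_pmf_finite[OF fin_bf[OF fin]])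
  have UV: "U \<subseteq> Vn" using ss unfolding U_def by auto
  have finU: "finite U" using UV fin finite_subset by blast
  have q1: "q \<le> 1" using q by simp
  have qr: "q ^ r \<le> q" using power_decreasing[of 1 r q] q1 q r by simp
  have qr0: "0 \<le> q ^ r" "q ^ r \<le> 1" using q q1 by (auto simp: power_le_one)
  have pw: "(\<Prod>v\<in>U. of_bool (X v)) * (1-q^r)^L \<le> \<bar>\<Prod>s\<leftarrow>ss. Ztup q X s\<bar>" for X
  proof (cases "\<forall>v\<in>U. X v")
    case True
    have "\<forall>s\<in>set ss. Ztup q X s = 1 - q^r"
      using True ss unfolding U_def Ztup_def Xtup_eq by auto
    then have "(\<Prod>s\<leftarrow>ss. Ztup q X s) = (\<Prod>s\<leftarrow>ss. 1 - q^r)"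
      by (metis map_cong)
    also have "\<dots> = (1-q^r)^L" unfolding L_def by (simp add: prod_list_nth)
    finally show ?thesis using True qr0 by (simp add: prod_of_bool finU)
  next
    case False
    then show ?thesis by (auto simp: prod_of_bool finU)
  qed
  have lower: "(1-c)^L * q^card U \<le> absZmoment Vn q ss"
  proof -
    have "(1-c)^L * q^card U \<le> (1-q^r)^L * q^card U"
      using q qr by (intro mult_right_mono power_mono) auto
    also have "\<dots> = measure_pmf.expectation M (\<lambda>X. (\<Prod>v\<in>U. of_bool (X v)) * (1-q^r)^L)"
      unfolding M_def using key[OF fin UV] q by simp
    also have "\<dots> \<le> measure_pmf.expectation M (\<lambda>X. \<bar>\<Prod>s\<leftarrow>ss. Ztup q X s\<bar>)"
      by (intro integral_mono int pw)
    finally show ?thesis unfolding absZmoment_def M_def .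
  qed
  define UT where "UT T = (\<Union>j\<in>T. set (ss ! j))" for T
  have finUT: "finite (UT T)" if "finite T" for T using that unfolding UT_def by auto
  have pw2: "\<bar>\<Prod>s\<leftarrow>ss. Ztup q X s\<bar> \<le>
     (\<Sum>T\<in>Pow {..<L}. (\<Prod>v\<in>UT T. of_bool (X v)) * q ^ (r * card ({..<L} - T)))" for X
  proof -
    have "\<bar>\<Prod>s\<leftarrow>ss. Ztup q X s\<bar> = (\<Prod>j<L. \<bar>Ztup q X (ss ! j)\<bar>)"
      unfolding L_def by (simp add: prod_list_nth abs_prod)
    also have "\<dots> \<le> (\<Prod>j<L. Xtup X (ss ! j) + q ^ r)"
    proof (intro prod_mono conjI)
      fix j assume "j \<in> {..<L}"
      then have "ss ! j \<in> set ss" unfolding L_def by auto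
      moreover have "0 \<le> Xtup X (ss ! j)" by (simp add: Xtup_eq)
      ultimately show "\<bar>Ztup q X (ss ! j)\<bar> \<le> Xtup X (ss ! j) + q ^ r"
        using qr0 ss by (auto simp: Ztup_def)
    qed auto
    also have "\<dots> = (\<Sum>T\<in>Pow {..<L}. (\<Prod>j\<in>T. Xtup X (ss ! j)) * (\<Prod>j\<in>{..<L} - T. q ^ r))"
      by (rule prod_add) simp
    also have "\<dots> = (\<Sum>T\<in>Pow {..<L}. (\<Prod>v\<in>UT T. of_bool (X v)) * q ^ (r * card ({..<L} - T)))"
    proof (intro sum.cong refl)
      fix T assume T: "T \<in> Pow {..<L}"
      then have fT: "finite T" by (auto intro: finite_subset)
      have "(\<Prod>j\<in>T. Xtup X (ss ! j)) = of_bool (\<forall>j\<in>T. \<forall>u\<in>set (ss ! j). X u)"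
        by (simp add: Xtup_eq prod_of_bool fT)
      also have "\<dots> = (\<Prod>v\<in>UT T. of_bool (X v))"
        by (simp add: prod_of_bool finUT fT) (auto simp: UT_def)
      finally show "(\<Prod>j\<in>T. Xtup X (ss ! j)) * (\<Prod>j\<in>{..<L} - T. q ^ r) =
          (\<Prod>v\<in>UT T. of_bool (X v)) * q ^ (r * card ({..<L} - T))"
        by (simp add: power_mult)
    qed
    finally show ?thesis .
  qed
  have cardUT: "card (UT T) \<le> r * card T" if "finite T" "T \<subseteq> {..<L}" for T
  proof -
    have "card (UT T) \<le> (\<Sum>j\<in>T. card (set (ss ! j)))"
      unfolding UT_def by (rule card_UN_le) fact
    also have "\<dots> \<le> (\<Sum>j\<in>T. r)"
    proof (intro sum_mono)
      fix j assume "j \<in> T"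
      then have "ss ! j \<in> set ss" using that unfolding L_def by auto
      then show "card (set (ss ! j)) \<le> r" using ss card_length by metis
    qed
    finally show ?thesis by (simp add: mult.commute)
  qed
  have UUT: "U = UT {..<L}"
  proof -
    have "set ss = (\<lambda>i. ss ! i) ` {..<length ss}"
      by (auto simp: in_set_conv_nth image_iff)
    then show ?thesis unfolding U_def UT_def L_def by simp
  qed
  have upper: "absZmoment Vn q ss \<le> fact (L + 2) * q^card U"
  proof -
    have "absZmoment Vn q ss \<le> measure_pmf.expectation M (\<lambda>X.
        (\<Sum>T\<in>Pow {..<L}. (\<Prod>v\<in>UT T. of_bool (X v)) * q ^ (r * card ({..<L} - T))))"
      unfolding absZmoment_def M_def[symmetric] by (intro integral_mono int pw2)
    also have "\<dots> = (\<Sum>T\<in>Pow {..<L}. q ^ card (UT T) * q ^ (r * card ({..<L} - T)))"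
    proof -
      have "\<And>T. UT T \<subseteq> Vn \<Longrightarrow> True" by simp
      show ?thesis
        apply (subst Bochner_Integration.integral_sum[OF int])
        apply (intro sum.cong refl)
        apply (subst integral_mult_left_zero)
        apply (subst key[OF fin _ _ q1, folded M_def])
        using UV UUT apply (auto simp: UT_def)[1]
        using q apply simp
        apply simp
        done
    qed
    also have "\<dots> \<le> (\<Sum>T\<in>Pow {..<L}. q ^ card U)"
    proof (intro sum_mono)
      fix T assume T: "T \<in> Pow {..<L}"
      then have fT: "finite T" by (auto intro: finite_subset)
      have "U \<subseteq> UT T \<union> UT ({..<L} - T)" unfolding UUT UT_def by auto
      then have "card U \<le> card (UT T \<union> UT ({..<L} - T))"
        by (intro card_mono) (auto simp: finUT fT)
      also have "\<dots> \<le> card (UT T) + card (UT ({..<L} - T))" by (rule card_Un_le)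
      also have "\<dots> \<le> card (UT T) + r * card ({..<L} - T)"
        using cardUT[of "{..<L} - T"] by auto
      finally have "q ^ (card (UT T) + r * card ({..<L} - T)) \<le> q ^ card U"
        using q q1 by (intro power_decreasing) auto
      then show "q ^ card (UT T) * q ^ (r * card ({..<L} - T)) \<le> q ^ card U"
        by (simp add: power_add)
    qed
    also have "\<dots> = 2 ^ L * q ^ card U" by (simp add: card_Pow)
    also have "\<dots> \<le> fact (L + 2) * q ^ card U"
      using q two_pow_fact[of L] by (intro mult_right_mono) auto
    finally show ?thesis .
  qed
  show ?thesis using lower upper unfolding U_def L_def by simp
qed


theorem lemma4p2:
  fixes V :: "nat \<Rightarrow> 'v set" and p :: "nat \<Rightarrow> real" and r L :: nat
  assumes "r \<ge> 1" and "L \<ge> 1"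
    and "\<forall>n. finite (V n)"
    and "\<forall>n. 0 < p n \<and> p n < 1"
    and "limsup (\<lambda>n. ereal (p n)) < 1"
  shows "\<exists>C>0. \<forall>n ss. length ss = L \<and>
           (\<forall>s\<in>set ss. length s = r \<and> distinct s \<and> set s \<subseteq> V n) \<longrightarrow>
           C * p n ^ card (\<Union>s\<in>set ss. set s) \<le> absZmoment (V n) (p n) ss \<and>
           absZmoment (V n) (p n) ss \<le> fact (L + 2) * p n ^ card (\<Union>s\<in>set ss. set s)"
proof -
  obtain d :: real where d: "limsup (\<lambda>n. ereal (p n)) < ereal d" "ereal d < 1"
    using ereal_dense2[OF assms(5)] by blast
  have "eventually (\<lambda>n. ereal (p n) < ereal d) sequentially"
    by (rule Limsup_lessD[OF d(1)])
  then obtain N where N: "\<And>n. n \<ge> N \<Longrightarrow> p n < d"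
    by (auto simp: eventually_sequentially)
  define c where "c = Max (insert d (p ` {..<N}))"
  have d1: "d < 1" using d(2) by simp
  have c1: "c < 1"
  proof -
    have "c \<in> insert d (p ` {..<N})" unfolding c_def by (intro Max_in) auto
    then show ?thesis using d1 assms(4) by auto
  qed
  have pc: "p n \<le> c" for n
  proof (cases "n < N")
    case True then show ?thesis unfolding c_def by (intro Max_ge) auto
  next
    case False
    then have "p n \<le> d" using N[of n] by simp
    also have "d \<le> c" unfolding c_def by (intro Max_ge) auto
    finally show ?thesis .
  qed
  show ?thesis
  proof (intro exI[of _ "(1 - c) ^ L"] conjI allI impI)
    show "0 < (1 - c) ^ L" using c1 by simp
  next
    fix n and ss :: "'v list list"
    assume H: "length ss = L \<and> (\<forall>s\<in>set ss. length s = r \<and> distinct s \<and> set s \<subseteq> V n)"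
    have "(1-c)^length ss * p n^card (\<Union>s\<in>set ss. set s) \<le> absZmoment (V n) (p n) ss \<and>
         absZmoment (V n) (p n) ss \<le> fact (length ss + 2) * p n^card (\<Union>s\<in>set ss. set s)"
      using H assms(1,3,4) pc c1 by (intro bounds) auto
    then show "(1 - c) ^ L * p n ^ card (\<Union>s\<in>set ss. set s) \<le> absZmoment (V n) (p n) ss"
      and "absZmoment (V n) (p n) ss \<le> fact (L + 2) * p n ^ card (\<Union>s\<in>set ss. set s)"
      using H by auto
  qed
qed

end
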